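(* Let $F=F(N,\mathcal D)$ be a connected GSC and let $x$ be a local cut point of $F$. For $n\ge1$ let $E'_n(x)=\bigcup_{\mathbf i\in\Omega_n(x)}\varphi_{\mathbf i}(F)$. Then there exists $m\ge1$ such that $x$ is a cut point of $E'_m(x)$.
   Context: GSC: $N\ge2$, $\mathcal D\subset\{0,\dots,N-1\}^2$ with $1<|\mathcal D|<N^2$, $\varphi_i(x)=\frac1N(x+i)$, $F$ the attractor $F=\bigcup_{i\in\mathcal D}\varphi_i(F)$; $\varphi_{i_1\cdots i_k}=\varphi_{i_1}\circ\cdots\circ\varphi_{i_k}$. $\Omega_n(x)=\{\mathbf i\in\mathcal D^n: x\in\varphi_{\mathbf i}(F)\}$. A local cut point of $F$ is a point that is a cut point (removal disconnects) of some connected neighborhood of itself in $F$. *)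

theory Defs
  imports "HOL-Analysis.Analysis"
begin

definition gsc_map :: "nat \<Rightarrow> nat \<times> nat \<Rightarrow> real \<times> real \<Rightarrow> real \<times> real" where
  "gsc_map N i x = (1 / real N) *\<^sub>R (x + (real (fst i), real (snd i)))"

text \<open>phi_{i1...ik} = phi_{i1} o ... o phi_{ik} for the word [i1,...,ik].\<close>
definition gsc_word_map :: "nat \<Rightarrow> (nat \<times> nat) list \<Rightarrow> real \<times> real \<Rightarrow> real \<times> real" where
  "gsc_word_map N w = foldr (\<lambda>i f. gsc_map N i \<circ> f) w id"

definition gsc_Omega ::
  "nat \<Rightarrow> (nat \<times> nat) set \<Rightarrow> (real \<times> real) set \<Rightarrow> nat \<Rightarrow> real \<times> real \<Rightarrow> (nat \<times> nat) list set" where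
  "gsc_Omega N D F n x = {w. length w = n \<and> set w \<subseteq> D \<and> x \<in> gsc_word_map N w ` F}"

definition gsc_E' ::
  "nat \<Rightarrow> (nat \<times> nat) set \<Rightarrow> (real \<times> real) set \<Rightarrow> nat \<Rightarrow> real \<times> real \<Rightarrow> (real \<times> real) set" where
  "gsc_E' N D F n x = (\<Union>w\<in>gsc_Omega N D F n x. gsc_word_map N w ` F)"

definition cut_point :: "'a::topological_space set \<Rightarrow> 'a \<Rightarrow> bool" where
  "cut_point A x \<longleftrightarrow> x \<in> A \<and> \<not> connected (A - {x})"

definition local_cut_point :: "'a::topological_space set \<Rightarrow> 'a \<Rightarrow> bool" where
  "local_cut_point F x \<longleftrightarrow>
     (\<exists>U. U \<subseteq> F \<and> connected U \<and>
          (\<exists>V. openin (top_of_set F) V \<and> x \<in> V \<and> V \<subseteq> U) \<and> cut_point U x)"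

end

theory Submission
  imports Defs
begin

lemma gwm_cons: "gsc_word_map N (i#w) = gsc_map N i \<circ> gsc_word_map N w"
  by (simp add: gsc_word_map_def)

lemma gsc_map_dist:
  assumes "N \<ge> 1"
  shows "dist (gsc_map N i a) (gsc_map N i b) = dist a b / real N"
proof -
  have "gsc_map N i a - gsc_map N i b = (1 / real N) *\<^sub>R (a - b)"
    unfolding gsc_map_def by (simp add: algebra_simps)
  then show ?thesis using assms
    by (simp add: dist_norm divide_inverse mult.commute)
qed

lemma gwm_dist:
  assumes "N \<ge> 1"
  shows "dist (gsc_word_map N w a) (gsc_word_map N w b) = dist a b / real N ^ length w"
proof (induction w)
  case Nil then show ?case by (simp add: gsc_word_map_def)
next
  case (Cons i w)
  then show ?case using assms by (simp add: gwm_cons gsc_map_dist field_simps)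
qed

lemma gwm_cont: "continuous_on UNIV (gsc_word_map N w)"
proof (induction w)
  case Nil then show ?case by (simp add: gsc_word_map_def)
next
  case (Cons i w)
  have "continuous_on UNIV (gsc_map N i)"
    unfolding gsc_map_def by (intro continuous_intros)
  then show ?case using Cons
    by (simp add: gwm_cons continuous_on_compose2[of UNIV "gsc_map N i"])
qed

lemma gwm_sub:
  assumes "F = (\<Union>i\<in>D. gsc_map N i ` F)" "set w \<subseteq> D"
  shows "gsc_word_map N w ` F \<subseteq> F"
  using assms(2)
proof (induction w)
  case Nil then show ?case by (simp add: gsc_word_map_def)
next
  case (Cons i w)
  then have "gsc_word_map N (i#w) ` F \<subseteq> gsc_map N i ` F"
    by (auto simp: gwm_cons image_comp[symmetric])
  also have "\<dots> \<subseteq> F" using Cons.prems assms(1) by auto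
  finally show ?case .
qed

lemma gwm_cover:
  assumes "F = (\<Union>i\<in>D. gsc_map N i ` F)" "y \<in> F"
  shows "\<exists>w. length w = n \<and> set w \<subseteq> D \<and> y \<in> gsc_word_map N w ` F"
  using assms(2)
proof (induction n arbitrary: y)
  case 0 then show ?case by (simp add: gsc_word_map_def)
next
  case (Suc n)
  then obtain i z where i: "i \<in> D" "z \<in> F" "y = gsc_map N i z"
    using assms(1) by blast
  then obtain w u where "length w = n" "set w \<subseteq> D" "u \<in> F" "z = gsc_word_map N w u"
    using Suc.IH by blast
  then show ?case using i
    by (intro exI[of _ "i#w"]) (auto simp: gwm_cons)
qed

theorem mainTheorem19:
  fixes N :: nat and D :: "(nat \<times> nat) set" and F :: "(real \<times> real) set" and x :: "real \<times> real"
  assumes "N \<ge> 2"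
    and "D \<subseteq> {0..<N} \<times> {0..<N}"
    and "1 < card D" and "card D < N\<^sup>2"
    and "compact F" and "F \<noteq> {}"
    and "F = (\<Union>i\<in>D. gsc_map N i ` F)"
    and "connected F"
    and "local_cut_point F x"
  shows "\<exists>m\<ge>1. cut_point (gsc_E' N D F m x) x"
proof -
  note selfsim = assms(7)
  obtain U V where UF: "U \<subseteq> F" and cU: "connected U" and oV: "openin (top_of_set F) V"
    and xV: "x \<in> V" and VU: "V \<subseteq> U" and cut: "cut_point U x"
    using assms(9) unfolding local_cut_point_def by blast
  have xF: "x \<in> F" using xV VU UF by blast
  obtain \<epsilon> where ep: "\<epsilon> > 0" "\<And>y. y \<in> F \<Longrightarrow> dist y x < \<epsilon> \<Longrightarrow> y \<in> V"
    using oV xV unfolding openin_euclidean_subtopology_iff by blast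
  have bF: "bounded F" using assms(5) compact_imp_bounded by blast
  define d where "d = diameter F"
  have d0: "d \<ge> 0" unfolding d_def by (simp add: diameter_ge_0 bF)
  obtain k :: nat where k: "d / \<epsilon> < real k" using reals_Archimedean2 by blast
  define n where "n = max 1 k"
  have n1: "n \<ge> 1" unfolding n_def by simp
  have "real k \<le> real n" unfolding n_def by simp
  also have "real n < 2 ^ n" by (metis of_nat_less_iff less_exp of_nat_numeral of_nat_power)
  also have "(2::real) ^ n \<le> real N ^ n" using assms(1) by (intro power_mono) auto
  finally have "d / \<epsilon> < real N ^ n" using k by linarith
  then have dsmall: "d / real N ^ n < \<epsilon>" using ep(1) assms(1)
    by (simp add: field_simps)
  define E where "E = gsc_E' N D F n x"
  have xE: "x \<in> E"
    using gwm_cover[OF selfsim xF, of n]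
    unfolding E_def gsc_E'_def gsc_Omega_def by blast
  have EV: "E \<subseteq> V"
  proof
    fix y assume "y \<in> E"
    then obtain w where w: "length w = n" "set w \<subseteq> D" "x \<in> gsc_word_map N w ` F"
      "y \<in> gsc_word_map N w ` F"
      unfolding E_def gsc_E'_def gsc_Omega_def by blast
    then obtain a b where ab: "a \<in> F" "b \<in> F" "x = gsc_word_map N w a" "y = gsc_word_map N w b"
      by blast
    have "dist y x = dist b a / real N ^ n"
      using ab w(1) gwm_dist[of N w b a] assms(1) by simp
    also have "\<dots> \<le> d / real N ^ n"
      using ab assms(1) unfolding d_def
      by (intro divide_right_mono diameter_bounded_bound bF) auto
    finally have "dist y x < \<epsilon>" using dsmall by linarith
    moreover have "y \<in> F" using gwm_sub[OF selfsim w(2)] w(4) by blast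
    ultimately show "y \<in> V" using ep(2) by blast
  qed
  define W where "W = {w. length w = n \<and> set w \<subseteq> D}"
  have finD: "finite D" using assms(2) finite_subset by blast
  have finW: "finite W" unfolding W_def using finite_lists_length_eq[OF finD, of n] by (simp add: conj_commute)
  define C where "C = (\<Union>w\<in>{w\<in>W. x \<notin> gsc_word_map N w ` F}. gsc_word_map N w ` F)"
  have "compact C" unfolding C_def using finW
    by (intro compact_UN) (auto intro: compact_continuous_image continuous_on_subset[OF gwm_cont] assms(5))
  moreover have "x \<notin> C" unfolding C_def by blast
  ultimately have "\<exists>r>0. \<forall>y\<in>C. r \<le> dist x y"
  proof -
    assume "compact C" "x \<notin> C"
    then have "closed C" by (simp add: compact_imp_closed)
    then have "\<not> (\<forall>e>0. \<exists>y\<in>C. dist y x < e)" using closed_approachable \<open>x \<notin> C\<close> by blast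
    then show ?thesis by (auto simp: dist_commute not_less)
  qed
  then obtain r where r: "r > 0" "\<And>y. y \<in> C \<Longrightarrow> r \<le> dist x y" by blast
  have ballE: "y \<in> E" if "y \<in> F" "dist x y < r" for y
  proof -
    obtain w where w: "length w = n" "set w \<subseteq> D" "y \<in> gsc_word_map N w ` F"
      using gwm_cover[OF selfsim \<open>y \<in> F\<close>] by blast
    have "y \<notin> C" using r(2)[of y] that(2) by linarith
    then have "x \<in> gsc_word_map N w ` F" using w unfolding C_def W_def by blast
    then show ?thesis using w unfolding E_def gsc_E'_def gsc_Omega_def by blast
  qed
  show ?thesis
  proof (rule exI[of _ n], intro conjI n1)
    show "cut_point (gsc_E' N D F n x) x"
      unfolding E_def[symmetric] cut_point_def
    proof (intro conjI xE notI)
      assume cE: "connected (E - {x})"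
      have ncU: "\<not> connected (U - {x})" using cut unfolding cut_point_def by blast
      then obtain T where T: "openin (top_of_set (U - {x})) T" "closedin (top_of_set (U - {x})) T"
        "T \<noteq> {}" "T \<noteq> U - {x}"
        unfolding connected_clopen by blast
      have EU: "E - {x} \<subseteq> U - {x}" using EV VU by blast
      have clopen_split: "E - {x} \<subseteq> S \<or> (E - {x}) \<inter> S = {}"
        if S: "openin (top_of_set (U - {x})) S" "closedin (top_of_set (U - {x})) S" for S
      proof -
        obtain O1 where O1: "open O1" "S = (U - {x}) \<inter> O1" using S(1) openin_open by blast
        obtain C1 where C1: "closed C1" "S = (U - {x}) \<inter> C1" using S(2) closedin_closed by blast
        have "S \<inter> (E - {x}) = (E - {x}) \<inter> O1" using O1 EU by blast
        moreover have "S \<inter> (E - {x}) = (E - {x}) \<inter> C1" using C1 EU by blast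
        ultimately have "openin (top_of_set (E - {x})) (S \<inter> (E - {x}))"
          "closedin (top_of_set (E - {x})) (S \<inter> (E - {x}))"
          using O1(1) C1(1) by (auto simp: openin_open closedin_closed)
        then have "S \<inter> (E - {x}) = {} \<or> S \<inter> (E - {x}) = E - {x}"
          using cE unfolding connected_clopen by blast
        then show ?thesis by blast
      qed
      obtain B where B: "openin (top_of_set (U - {x})) B" "closedin (top_of_set (U - {x})) B"
        "B \<noteq> {}" "B \<subseteq> U - {x}" "B \<inter> E = {}"
      proof (cases "E - {x} \<subseteq> T")
        case True
        let ?B = "(U - {x}) - T"
        have "openin (top_of_set (U - {x})) ?B" using T(2)
          by (simp add: openin_diff)
        moreover have "closedin (top_of_set (U - {x})) ?B" using T(1)
          by (simp add: closedin_diff)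
        moreover have "?B \<noteq> {}" using T(4) openin_subset[OF T(1)] by auto
        moreover have "?B \<inter> E = {}" using True by blast
        ultimately show ?thesis using that by blast
      next
        case False
        then have "(E - {x}) \<inter> T = {}" using clopen_split T(1,2) by blast
        moreover have "T \<subseteq> U - {x}" using openin_subset[OF T(1)] by simp
        ultimately show ?thesis using that T by blast
      qed
      have oB: "openin (top_of_set U) B"
      proof -
        have "openin (top_of_set U) (U - {x})"
          by (intro openin_delete) simp
        then show ?thesis using B(1) openin_trans by blast
      qed
      have xcl: "x \<notin> closure B"
      proof
        assume "x \<in> closure B"
        then obtain y where "y \<in> B" "dist y x < r" using r(1) closure_approachable by blast
        then have "y \<in> E" using ballE[of y] B(4) UF by (auto simp: dist_commute)
        then show False using \<open>y \<in> B\<close> B(5) by blast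
      qed
      have cB: "closedin (top_of_set U) B"
      proof -
        obtain C1 where C1: "closed C1" "B = (U - {x}) \<inter> C1" using B(2) closedin_closed by blast
        have "B \<subseteq> C1" using C1 by blast
        then have "closure B \<subseteq> C1" using C1(1) closure_minimal by blast
        then have "B = U \<inter> closure B" using xcl C1(2) closure_subset[of B] B(4) by blast
        then show ?thesis unfolding closedin_closed by blast
      qed
      have "B = {} \<or> B = U" using cU oB cB unfolding connected_clopen by blast
      moreover have "x \<in> U" using xV VU by blast
      ultimately show False using B(3,4) by blast
    qed
  qed
qed

end
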